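(* Let $l:\mathbb{R}\times\mathbb{R}\to\mathbb{R}$ be doubly convex (jointly convex), let $Z=(z_1,\dots,z_n)$ be any sample and $f:\mathbb{X}\to\mathbb{R}$ any model. Then for all integers $1\le k\le k'\le n$, the empirical $k$-risks satisfy $r_k(f,Z)\ge r_{k'}(f,Z)$. In particular this holds for the Kullback–Leibler loss $\mathrm{kl}(\hat y,y)=y\log\frac{y}{\hat y}+(1-y)\log\frac{1-y}{1-\hat y}$ on $(0,1)\times[0,1]$ (with $0\log 0=0$) when $f$ takes values in $(0,1)$ and labels lie in $[0,1]$.
   Context: For a finite family $S$ and function $g$, $\hat{E}_S[g(z)]=\frac{1}{|S|}\sum_{z\in S}g(z)$. For a model $f$, loss $l(\hat y,y)$ and sample $Z=(z_1,\dots,z_n)$ with $z_i=(x_i,y_i)$, the empirical $k$-risk is $r_k(f,Z)=\binom{n}{k}^{-1}\sum_{I}l(\hat{E}_{S_I}[f(x)],\hat{E}_{S_I}[y])$, summing over all $k$-element index sets $I\subset\{1,\dots,n\}$ with $S_I=(z_i)_{i\in I}$. Doubly convex means jointly convex in both arguments. *)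

theory Defs
  imports "HOL-Analysis.Analysis"
begin

definition emp_mean :: "nat set \<Rightarrow> (nat \<Rightarrow> real) \<Rightarrow> real" where
  "emp_mean S g = (\<Sum>i\<in>S. g i) / real (card S)"

definition k_risk :: "(real \<Rightarrow> real \<Rightarrow> real) \<Rightarrow> ('x \<Rightarrow> real) \<Rightarrow> nat \<Rightarrow> (nat \<Rightarrow> 'x \<times> real) \<Rightarrow> nat \<Rightarrow> real" where
  "k_risk l f n Z k =
     (\<Sum>I\<in>{I. I \<subseteq> {..<n} \<and> card I = k}.
        l (emp_mean I (\<lambda>i. f (fst (Z i)))) (emp_mean I (\<lambda>i. snd (Z i)))) / real (n choose k)"

definition kl :: "real \<Rightarrow> real \<Rightarrow> real" where
  "kl yh y = (if y = 0 then 0 else y * ln (y / yh))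
           + (if y = 1 then 0 else (1 - y) * ln ((1 - y) / (1 - yh)))"

end

theory Submission
  imports Defs
begin

definition KS :: "nat \<Rightarrow> nat \<Rightarrow> nat set set" where
  "KS n m = {I. I \<subseteq> {..<n} \<and> card I = m}"

lemma KS_finite: "finite (KS n m)"
  unfolding KS_def by (rule finite_subset[of _ "Pow {..<n}"]) auto

lemma KS_card: "card (KS n m) = n choose m"
  unfolding KS_def using n_subsets[of "{..<n}" m] by simp

lemma mean_split:
  assumes "finite J" "card J = Suc k" "1 \<le> k"
  shows "emp_mean J F = (\<Sum>j\<in>J. emp_mean (J - {j}) F) / real (Suc k)"
proof -
  have "(\<Sum>j\<in>J. emp_mean (J - {j}) F) = (\<Sum>j\<in>J. (sum F J - F j) / real k)"
    apply (rule sum.cong, simp)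
    using assms by (simp add: emp_mean_def sum_diff1 card_Diff_singleton)
  also have "\<dots> = (real (card J) * sum F J - sum F J) / real k"
    by (simp add: sum_divide_distrib[symmetric] sum_subtractf)
  also have "\<dots> = sum F J"
    using assms by (simp add: field_simps)
  finally show ?thesis using assms by (simp add: emp_mean_def)
qed

lemma double_count:
  "(\<Sum>J\<in>KS n (Suc k). \<Sum>j\<in>J. h (J - {j})) = (\<Sum>I\<in>KS n k. real (n - k) * h I)"
proof -
  have fin1: "finite (Sigma (KS n (Suc k)) (\<lambda>J. J))"
    using KS_finite by (auto simp: KS_def intro!: finite_SigmaI dest: finite_subset)
  have "(\<Sum>J\<in>KS n (Suc k). \<Sum>j\<in>J. h (J - {j})) = (\<Sum>p\<in>Sigma (KS n (Suc k)) (\<lambda>J. J). h (fst p - {snd p}))"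
    using KS_finite by (subst sum.Sigma) (auto simp: KS_def split_beta dest: finite_subset)
  also have "\<dots> = (\<Sum>p\<in>Sigma (KS n k) (\<lambda>I. {..<n} - I). h (fst p))"
    apply (rule sum.reindex_bij_witness[where i = "\<lambda>p. (insert (snd p) (fst p), snd p)"
        and j = "\<lambda>p. (fst p - {snd p}, snd p)"])
        apply (auto simp: KS_def card_Diff_singleton insert_absorb)
    apply (subst card_insert_disjoint)
      apply (auto dest: finite_subset)
    done
  also have "\<dots> = (\<Sum>I\<in>KS n k. \<Sum>j\<in>{..<n} - I. h I)"
    using KS_finite by (subst sum.Sigma) (auto simp: split_beta)
  also have "\<dots> = (\<Sum>I\<in>KS n k. real (n - k) * h I)"
    apply (rule sum.cong, simp)
    by (auto simp: KS_def card_Diff_subset finite_subset)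
  finally show ?thesis .
qed

lemma binom_rel: "real (n choose Suc k) * real (Suc k) = real (n choose k) * real (n - k)"
proof -
  have "(\<Sum>J\<in>KS n (Suc k). \<Sum>j\<in>J. (1::real)) = (\<Sum>I\<in>KS n k. real (n - k) * 1)"
    by (rule double_count)
  moreover have "(\<Sum>J\<in>KS n (Suc k). \<Sum>j\<in>J. (1::real)) = (\<Sum>J\<in>KS n (Suc k). real (Suc k))"
    by (rule sum.cong) (auto simp: KS_def)
  ultimately show ?thesis by (simp add: KS_card)
qed


lemma step_lemma:
  fixes l :: "real \<Rightarrow> real \<Rightarrow> real"
  assumes cv: "convex_on C (\<lambda>p. l (fst p) (snd p))"
    and pts: "\<And>I. I \<subseteq> {..<n} \<Longrightarrow> I \<noteq> {} \<Longrightarrow> (emp_mean I F, emp_mean I Y) \<in> C"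
    and k: "1 \<le> k" "Suc k \<le> n"
  shows "(\<Sum>J\<in>KS n (Suc k). l (emp_mean J F) (emp_mean J Y)) / real (n choose Suc k)
       \<le> (\<Sum>I\<in>KS n k. l (emp_mean I F) (emp_mean I Y)) / real (n choose k)"
proof -
  define g where "g I = l (emp_mean I F) (emp_mean I Y)" for I
  have each: "g J \<le> (\<Sum>j\<in>J. g (J - {j})) / real (Suc k)" if J: "J \<in> KS n (Suc k)" for J
  proof -
    have fJ: "finite J" and cJ: "card J = Suc k" and sJ: "J \<subseteq> {..<n}"
      using J by (auto simp: KS_def dest: finite_subset)
    have ne: "J \<noteq> {}" using cJ by auto
    have "(\<lambda>p. l (fst p) (snd p)) (\<Sum>j\<in>J. (1 / real (Suc k)) *\<^sub>R (emp_mean (J - {j}) F, emp_mean (J - {j}) Y))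
        \<le> (\<Sum>j\<in>J. (1 / real (Suc k)) * (\<lambda>p. l (fst p) (snd p)) (emp_mean (J - {j}) F, emp_mean (J - {j}) Y))"
    proof (rule convex_on_sum[OF fJ ne cv])
      show "(\<Sum>j\<in>J. 1 / real (Suc k)) = 1" using cJ by simp
      show "\<And>i. i \<in> J \<Longrightarrow> 0 \<le> 1 / real (Suc k)" by simp
      fix i assume "i \<in> J"
      moreover have ne2: "J - {i} \<noteq> {}" using cJ k fJ \<open>i \<in> J\<close>
        by (metis One_nat_def card.empty card_Diff_singleton diff_Suc_1 not_one_le_zero)
      ultimately show "(emp_mean (J - {i}) F, emp_mean (J - {i}) Y) \<in> C"
        using pts[OF _ ne2] sJ by blast
    qed
    moreover have "(\<Sum>j\<in>J. (1 / real (Suc k)) *\<^sub>R (emp_mean (J - {j}) F, emp_mean (J - {j}) Y))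
        = (emp_mean J F, emp_mean J Y)"
      using mean_split[OF fJ cJ k(1), of F] mean_split[OF fJ cJ k(1), of Y]
      by (simp add: prod_eq_iff fst_sum snd_sum sum_divide_distrib)
    ultimately show ?thesis
      by (simp add: g_def sum_divide_distrib)
  qed
  have S: "(\<Sum>J\<in>KS n (Suc k). g J) \<le> (\<Sum>J\<in>KS n (Suc k). (\<Sum>j\<in>J. g (J - {j})) / real (Suc k))"
    by (rule sum_mono) (rule each)
  also have "\<dots> = (\<Sum>I\<in>KS n k. real (n - k) * g I) / real (Suc k)"
    by (simp add: sum_divide_distrib[symmetric] double_count)
  also have "\<dots> = real (n - k) * (\<Sum>I\<in>KS n k. g I) / real (Suc k)"
    by (simp add: sum_distrib_left)
  finally have S2: "(\<Sum>J\<in>KS n (Suc k). g J) \<le> real (n - k) * (\<Sum>I\<in>KS n k. g I) / real (Suc k)" .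
  have pos: "real (n choose k) > 0" "real (n choose Suc k) > 0" using k by auto
  have br: "real (n choose Suc k) = real (n choose k) * real (n - k) / real (Suc k)"
    using binom_rel[of n k] by (simp add: field_simps)
  have "(\<Sum>J\<in>KS n (Suc k). g J) / real (n choose Suc k)
      \<le> real (n - k) * (\<Sum>I\<in>KS n k. g I) / real (Suc k) / real (n choose Suc k)"
    by (rule divide_right_mono[OF S2]) (use pos in simp)
  also have "\<dots> = (\<Sum>I\<in>KS n k. g I) / real (n choose k)"
  proof -
    have "real (n - k) > 0" using k by simp
    moreover have "\<And>x y z S::real. x > 0 \<Longrightarrow> y > 0 \<Longrightarrow> z > 0 \<Longrightarrow> x * S / z / (y * x / z) = S / y"
      by (simp add: field_simps)
    ultimately show ?thesis unfolding br using pos(1) by simp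
  qed
  finally show ?thesis by (simp add: g_def)
qed

lemma mono_risk:
  fixes l :: "real \<Rightarrow> real \<Rightarrow> real"
  assumes cv: "convex_on C (\<lambda>p. l (fst p) (snd p))"
    and pts: "\<And>I. I \<subseteq> {..<n} \<Longrightarrow> I \<noteq> {} \<Longrightarrow> (emp_mean I F, emp_mean I Y) \<in> C"
    and k: "1 \<le> k" "k \<le> k'" "k' \<le> n"
  shows "(\<Sum>J\<in>KS n k'. l (emp_mean J F) (emp_mean J Y)) / real (n choose k')
       \<le> (\<Sum>I\<in>KS n k. l (emp_mean I F) (emp_mean I Y)) / real (n choose k)"
  using k(2,3)
proof (induction k' rule: dec_induct)
  case base then show ?case by simp
next
  case (step m)
  have "(\<Sum>J\<in>KS n (Suc m). l (emp_mean J F) (emp_mean J Y)) / real (n choose Suc m)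
     \<le> (\<Sum>I\<in>KS n m. l (emp_mean I F) (emp_mean I Y)) / real (n choose m)"
    by (rule step_lemma[OF cv pts]) (use k step in auto)
  with step show ?case by simp
qed

lemma risk_KS: "k_risk l f n Z k = (\<Sum>I\<in>KS n k. l (emp_mean I (\<lambda>i. f (fst (Z i)))) (emp_mean I (\<lambda>i. snd (Z i)))) / real (n choose k)"
  by (simp add: k_risk_def KS_def)

definition pl :: "real \<Rightarrow> real \<Rightarrow> real" where
  "pl a b = (if a = 0 then 0 else a * ln (a / b))"

lemma pl_lower:
  assumes "a \<ge> 0" "b > 0" "c > 0"
  shows "pl a b \<ge> a * ln c + a - b * c"
proof (cases "a = 0")
  case True then show ?thesis using assms by (simp add: pl_def)
next
  case False
  then have a: "a > 0" using assms by simp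
  have x: "a / (b * c) > 0" using a assms by simp
  have "ln (b * c / a) \<le> b * c / a - 1"
    by (rule ln_le_minus_one) (use a assms in simp)
  moreover have "ln (b * c / a) = - ln (a / (b * c))"
    using a assms by (simp add: ln_div)
  ultimately have h: "ln (a / (b * c)) \<ge> 1 - b * c / a" by simp
  have "ln (a / b) = ln c + ln (a / (b * c))"
    using a assms by (simp add: ln_div ln_mult)
  then have "a * ln (a / b) = a * ln c + a * ln (a / (b * c))" by (simp add: algebra_simps)
  moreover have "a * ln (a / (b * c)) \<ge> a * (1 - b * c / a)"
    using h a by (simp add: mult_left_mono)
  moreover have "a * (1 - b * c / a) = a - b * c" using a by (simp add: field_simps)
  ultimately show ?thesis using False by (simp add: pl_def)
qed

lemma pl_convex:
  assumes "a1 \<ge> 0" "a2 \<ge> 0" "b1 > 0" "b2 > 0" "t \<ge> 0" "t \<le> 1"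
  shows "pl ((1 - t) * a1 + t * a2) ((1 - t) * b1 + t * b2) \<le> (1 - t) * pl a1 b1 + t * pl a2 b2"
proof -
  define A where "A = (1 - t) * a1 + t * a2"
  define B where "B = (1 - t) * b1 + t * b2"
  have B: "B > 0" unfolding B_def using assms
    by (cases "t = 0") (auto intro: add_pos_nonneg add_nonneg_pos)
  have A: "A \<ge> 0" unfolding A_def using assms by simp
  show ?thesis
  proof (cases "A = 0")
    case True
    then have "(1 - t) * a1 = 0" "t * a2 = 0" unfolding A_def using assms
      by (smt (verit) mult_nonneg_nonneg)+
    then have z1: "(1 - t) * pl a1 b1 = 0" and z2: "t * pl a2 b2 = 0" by (auto simp: pl_def)
    have "pl A B = 0" using True by (simp add: pl_def)
    then show ?thesis unfolding A_def[symmetric] B_def[symmetric] using z1 z2 by linarith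
  next
    case False
    then have Ap: "A > 0" using A by simp
    define c where "c = A / B"
    have c: "c > 0" using Ap B by (simp add: c_def)
    have l1: "pl a1 b1 \<ge> a1 * ln c + a1 - b1 * c" by (rule pl_lower) (use assms c in auto)
    have l2: "pl a2 b2 \<ge> a2 * ln c + a2 - b2 * c" by (rule pl_lower) (use assms c in auto)
    have "(1 - t) * pl a1 b1 + t * pl a2 b2 \<ge> (1 - t) * (a1 * ln c + a1 - b1 * c) + t * (a2 * ln c + a2 - b2 * c)"
      using l1 l2 assms by (intro add_mono mult_left_mono) auto
    moreover have "(1 - t) * (a1 * ln c + a1 - b1 * c) + t * (a2 * ln c + a2 - b2 * c) = A * ln c + A - B * c"
      by (simp add: A_def B_def algebra_simps)
    moreover have "A - B * c = 0" using B by (simp add: c_def)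
    moreover have "pl A B = A * ln c" using False by (simp add: pl_def c_def)
    ultimately show ?thesis by (simp add: A_def[symmetric] B_def[symmetric])
  qed
qed

lemma kl_pl: "kl yh y = pl y yh + pl (1 - y) (1 - yh)"
  by (simp add: kl_def pl_def)

lemma kl_convex: "convex_on ({0<..<1} \<times> {0..1}) (\<lambda>p. kl (fst p) (snd p))"
proof (rule convex_onI)
  show "convex ({0<..<1::real} \<times> {0..1::real})" by (intro convex_Times) auto
  fix t :: real and x y :: "real \<times> real"
  assume t: "0 < t" "t < 1" and x: "x \<in> {0<..<1} \<times> {0..1}" and y: "y \<in> {0<..<1} \<times> {0..1}"
  obtain x1 x2 y1 y2 where xy: "x = (x1, x2)" "y = (y1, y2)" by fastforce
  have p1: "pl ((1 - t) * x2 + t * y2) ((1 - t) * x1 + t * y1) \<le> (1 - t) * pl x2 x1 + t * pl y2 y1"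
    by (rule pl_convex) (use t x y xy in auto)
  have p2: "pl ((1 - t) * (1 - x2) + t * (1 - y2)) ((1 - t) * (1 - x1) + t * (1 - y1))
      \<le> (1 - t) * pl (1 - x2) (1 - x1) + t * pl (1 - y2) (1 - y1)"
    by (rule pl_convex) (use t x y xy in auto)
  have e1: "(1 - t) * (1 - x2) + t * (1 - y2) = 1 - ((1 - t) * x2 + t * y2)" by (simp add: algebra_simps)
  have e2: "(1 - t) * (1 - x1) + t * (1 - y1) = 1 - ((1 - t) * x1 + t * y1)" by (simp add: algebra_simps)
  show "kl (fst ((1 - t) *\<^sub>R x + t *\<^sub>R y)) (snd ((1 - t) *\<^sub>R x + t *\<^sub>R y))
       \<le> (1 - t) * kl (fst x) (snd x) + t * kl (fst y) (snd y)"
    using p1 p2 unfolding e1 e2 by (simp add: xy kl_pl algebra_simps)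
qed

theorem mainTheorem6:
  fixes f :: "'x \<Rightarrow> real" and Z :: "nat \<Rightarrow> 'x \<times> real" and n k k' :: nat
  assumes "1 \<le> k" and "k \<le> k'" and "k' \<le> n"
  shows "(\<forall>l :: real \<Rightarrow> real \<Rightarrow> real. convex_on UNIV (\<lambda>p. l (fst p) (snd p)) \<longrightarrow>
            k_risk l f n Z k' \<le> k_risk l f n Z k)
       \<and> ((\<forall>x. 0 < f x \<and> f x < 1) \<and> (\<forall>i<n. 0 \<le> snd (Z i) \<and> snd (Z i) \<le> 1) \<longrightarrow>
            k_risk kl f n Z k' \<le> k_risk kl f n Z k)"
proof (intro conjI allI impI)
  fix l :: "real \<Rightarrow> real \<Rightarrow> real"
  assume "convex_on UNIV (\<lambda>p. l (fst p) (snd p))"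
  then show "k_risk l f n Z k' \<le> k_risk l f n Z k"
    unfolding risk_KS by (rule mono_risk) (use assms in auto)
next
  assume h: "(\<forall>x. 0 < f x \<and> f x < 1) \<and> (\<forall>i<n. 0 \<le> snd (Z i) \<and> snd (Z i) \<le> 1)"
  have pts: "(emp_mean I (\<lambda>i. f (fst (Z i))), emp_mean I (\<lambda>i. snd (Z i))) \<in> {0<..<1} \<times> {0..1}"
    if I: "I \<subseteq> {..<n}" "I \<noteq> {}" for I
  proof -
    have fI: "finite I" using I finite_subset by blast
    have cI: "real (card I) > 0" using fI I by (simp add: card_gt_0_iff)
    have a: "(\<Sum>i\<in>I. f (fst (Z i))) > 0" using h fI I by (intro sum_pos) auto
    have b: "(\<Sum>i\<in>I. f (fst (Z i))) < (\<Sum>i\<in>I. 1)" using h fI I by (intro sum_strict_mono) auto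
    have c: "(\<Sum>i\<in>I. snd (Z i)) \<ge> 0" using h I by (intro sum_nonneg) auto
    have d: "(\<Sum>i\<in>I. snd (Z i)) \<le> (\<Sum>i\<in>I. 1)" using h I by (intro sum_mono) auto
    show ?thesis using a b c d cI by (simp add: emp_mean_def field_simps)
  qed
  show "k_risk kl f n Z k' \<le> k_risk kl f n Z k"
    unfolding risk_KS by (rule mono_risk[OF kl_convex pts]) (use assms in auto)
qed

end
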